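(* Let $\mathcal E$ be a nest on a complex Banach space $X$ and let $\mathcal J$ be a $\mathcal T(\mathcal E)$-bimodule. Let $\mathcal J_0$ be the set of finite rank operators in $\mathcal J$ and $\overline{\mathcal J_0}$ its norm closure. Then $\Phi_{\mathcal J_0}=\Phi_{\overline{\mathcal J_0}}=\Phi_{\mathcal J}$.
   Context: A nest $\mathcal E$ on $X$ is a family of closed linear subspaces of $X$, totally ordered by inclusion, containing $\{0\}$ and $X$, closed under arbitrary meets (intersections) and joins (norm-closed linear spans of unions). $\mathcal T(\mathcal E)=\{T\in\mathcal B(X): TE\subseteq E\ \forall E\in\mathcal E\}$. A $\mathcal T(\mathcal E)$-bimodule is a linear subspace $\mathcal J\subseteq\mathcal B(X)$ with $\mathcal T(\mathcal E)\mathcal J\subseteq\mathcal J$ and $\mathcal J\mathcal T(\mathcal E)\subseteq\mathcal J$ ($\mathcal J_0$ and $\overline{\mathcal J_0}$ are again bimodules). For a bimodule $\mathcal J$, $\Phi_{\mathcal J}:\mathcal E\to\mathcal E$ is $\Phi_{\mathcal J}(E)=[\mathcal JE]$, the norm-closed linear span of $\{Tx:T\in\mathcal J,x\in E\}$. *)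

theory Defs
  imports "HOL-Analysis.Analysis"
begin

text \<open>A complex Banach space is modelled as a real Banach space (type class banach)
  together with a complex structure J (multiplication by the imaginary unit),
  compatible with the norm: the norm of (a + b i) x equals |a + b i| times the norm of x.\<close>

definition cscale :: "('a::real_vector \<Rightarrow> 'a) \<Rightarrow> complex \<Rightarrow> 'a \<Rightarrow> 'a" where
  "cscale J c x = Re c *\<^sub>R x + Im c *\<^sub>R J x"

definition complex_structure :: "('a::real_normed_vector \<Rightarrow> 'a) \<Rightarrow> bool" where
  "complex_structure J \<longleftrightarrow> linear J \<and> (\<forall>x. J (J x) = - x) \<and>
     (\<forall>c x. norm (cscale J c x) = cmod c * norm x)"

definition csubspace :: "('a::real_vector \<Rightarrow> 'a) \<Rightarrow> 'a set \<Rightarrow> bool" where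
  "csubspace J S \<longleftrightarrow> subspace S \<and> (\<forall>x\<in>S. J x \<in> S)"

definition cspan :: "('a::real_vector \<Rightarrow> 'a) \<Rightarrow> 'a set \<Rightarrow> 'a set" where
  "cspan J S = span (S \<union> J ` S)"

definition closed_cspan :: "('a::real_normed_vector \<Rightarrow> 'a) \<Rightarrow> 'a set \<Rightarrow> 'a set" where
  "closed_cspan J S = closure (cspan J S)"

definition bops :: "('a::real_normed_vector \<Rightarrow> 'a) \<Rightarrow> ('a \<Rightarrow> 'a) set" where
  "bops J = {T. bounded_linear T \<and> (\<forall>x. T (J x) = J (T x))}"

definition nest :: "('a::real_normed_vector \<Rightarrow> 'a) \<Rightarrow> 'a set set \<Rightarrow> bool" where
  "nest J \<E> \<longleftrightarrow>
     (\<forall>E\<in>\<E>. closed E \<and> csubspace J E) \<and>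
     (\<forall>A\<in>\<E>. \<forall>B\<in>\<E>. A \<subseteq> B \<or> B \<subseteq> A) \<and>
     {0} \<in> \<E> \<and> UNIV \<in> \<E> \<and>
     (\<forall>\<F>. \<F> \<subseteq> \<E> \<longrightarrow> \<Inter>\<F> \<in> \<E>) \<and>
     (\<forall>\<F>. \<F> \<subseteq> \<E> \<longrightarrow> closed_cspan J (\<Union>\<F>) \<in> \<E>)"

definition nest_alg :: "('a::real_normed_vector \<Rightarrow> 'a) \<Rightarrow> 'a set set \<Rightarrow> ('a \<Rightarrow> 'a) set" where
  "nest_alg J \<E> = {T \<in> bops J. \<forall>E\<in>\<E>. T ` E \<subseteq> E}"

definition op_csubspace :: "('a::real_normed_vector \<Rightarrow> 'a) \<Rightarrow> ('a \<Rightarrow> 'a) set \<Rightarrow> bool" where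
  "op_csubspace J \<J> \<longleftrightarrow> \<J> \<subseteq> bops J \<and> (\<lambda>x. 0) \<in> \<J> \<and>
     (\<forall>S\<in>\<J>. \<forall>T\<in>\<J>. (\<lambda>x. S x + T x) \<in> \<J>) \<and>
     (\<forall>c. \<forall>T\<in>\<J>. (\<lambda>x. cscale J c (T x)) \<in> \<J>)"

definition bimodule :: "('a::real_normed_vector \<Rightarrow> 'a) \<Rightarrow> 'a set set \<Rightarrow> ('a \<Rightarrow> 'a) set \<Rightarrow> bool" where
  "bimodule J \<E> \<J> \<longleftrightarrow> op_csubspace J \<J> \<and>
     (\<forall>A\<in>nest_alg J \<E>. \<forall>T\<in>\<J>. A \<circ> T \<in> \<J> \<and> T \<circ> A \<in> \<J>)"

definition finite_rank :: "('a::real_vector \<Rightarrow> 'a) \<Rightarrow> bool" where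
  "finite_rank T \<longleftrightarrow> (\<exists>F. finite F \<and> range T \<subseteq> span F)"

definition finite_rank_part :: "('a::real_vector \<Rightarrow> 'a) set \<Rightarrow> ('a \<Rightarrow> 'a) set" where
  "finite_rank_part \<J> = {T \<in> \<J>. finite_rank T}"

definition op_closure :: "('a::real_normed_vector \<Rightarrow> 'a) \<Rightarrow> ('a \<Rightarrow> 'a) set \<Rightarrow> ('a \<Rightarrow> 'a) set" where
  "op_closure J \<J> = {T \<in> bops J. \<forall>e>0. \<exists>S\<in>\<J>. onorm (\<lambda>x. T x - S x) < e}"

definition Phi :: "('a::real_normed_vector \<Rightarrow> 'a) \<Rightarrow> ('a \<Rightarrow> 'a) set \<Rightarrow> 'a set \<Rightarrow> 'a set" where
  "Phi J \<J> E = closed_cspan J {T x | T x. T \<in> \<J> \<and> x \<in> E}"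

end

theory Submission
  imports Defs
begin

lemma chain_union_subspace:
  fixes C :: "('a::real_vector) set set"
  assumes ch: "\<And>X Y. X \<in> C \<Longrightarrow> Y \<in> C \<Longrightarrow> X \<subseteq> Y \<or> Y \<subseteq> X"
    and sub: "\<And>X. X \<in> C \<Longrightarrow> subspace X" and ne: "C \<noteq> {}"
  shows "subspace (\<Union>C)"
  unfolding subspace_def
proof (intro conjI ballI allI)
  show "0 \<in> \<Union>C" using ne sub subspace_0 by blast
next
  fix x y assume "x \<in> \<Union>C" "y \<in> \<Union>C"
  then obtain X Y where "X \<in> C" "Y \<in> C" "x \<in> X" "y \<in> Y" by blast
  then show "x + y \<in> \<Union>C" using ch[of X Y] sub subspace_add
    by (metis UnionI subsetD)
next
  fix c and x assume "x \<in> \<Union>C"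
  then show "c *\<^sub>R x \<in> \<Union>C" using sub subspace_scale by blast
qed

lemma hb_ext:
  fixes p :: "'a::real_vector \<Rightarrow> real"
  assumes sub: "\<And>x y. p (x+y) \<le> p x + p y"
    and hom: "\<And>a x. a > 0 \<Longrightarrow> p (a *\<^sub>R x) = a * p x"
    and nn: "\<And>x. p x \<ge> 0" and w0: "w \<noteq> 0"
  shows "\<exists>g. linear g \<and> (\<forall>x. g x \<le> p x) \<and> g w = p w"
proof -
  define A where "A = {G :: ('a \<times> real) set. subspace G \<and>
     (\<forall>x y y'. (x,y)\<in>G \<longrightarrow> (x,y')\<in>G \<longrightarrow> y = y') \<and>
     (\<forall>x y. (x,y)\<in>G \<longrightarrow> y \<le> p x) \<and> (w, p w) \<in> G}"
  have G0: "span {(w, p w)} \<in> A"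
  proof -
    have sp: "span {(w, p w)} = range (\<lambda>t. (t *\<^sub>R w, t * p w))"
      by (auto simp: span_singleton)
    have p0: "p 0 = 0" using hom[of 2 0] by simp
    have "y \<le> p x" if "(x, y) \<in> span {(w, p w)}" for x y
    proof -
      from that sp obtain t where t: "x = t *\<^sub>R w" "y = t * p w" by auto
      show ?thesis
      proof (cases "t > 0")
        case True then show ?thesis using t hom by simp
      next
        case False then have "t * p w \<le> 0" using nn[of w] by (simp add: mult_nonpos_nonneg)
        then show ?thesis using t nn[of x] by simp
      qed
    qed
    moreover have "y = y'" if "(x, y) \<in> span {(w, p w)}" "(x, y') \<in> span {(w, p w)}" for x y y'
    proof -
      have r1: "(x,y) \<in> range (\<lambda>t. (t *\<^sub>R w, t * p w))" using that(1) sp by simp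
      have r2: "(x,y') \<in> range (\<lambda>t. (t *\<^sub>R w, t * p w))" using that(2) sp by simp
      from r1 obtain t where t1: "(x,y) = (t *\<^sub>R w, t * p w)" by blast
      from r2 obtain t' where t2: "(x,y') = (t' *\<^sub>R w, t' * p w)" by blast
      have t: "x = t *\<^sub>R w" "y = t * p w" "x = t' *\<^sub>R w" "y' = t' * p w" using t1 t2 by simp_all
      then have "t = t'" using w0 by (metis scaleR_cancel_right)
      then show ?thesis using t by simp
    qed
    ultimately show ?thesis unfolding A_def by (auto intro: span_base)
  qed
  have "\<exists>M\<in>A. \<forall>X\<in>A. M \<subseteq> X \<longrightarrow> X = M"
  proof (rule subset_Zorn)
    fix C assume C: "subset.chain A C"
    show "\<exists>U\<in>A. \<forall>X\<in>C. X \<subseteq> U"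
    proof (cases "C = {}")
      case True then show ?thesis using G0 by blast
    next
      case False
      have CA: "C \<subseteq> A" and ch: "\<And>X Y. X \<in> C \<Longrightarrow> Y \<in> C \<Longrightarrow> X \<subseteq> Y \<or> Y \<subseteq> X"
        using C by (auto simp: subset_chain_def)
      have "subspace (\<Union>C)"
        by (rule chain_union_subspace[OF ch _ False]) (use CA A_def in auto)
      moreover have "\<forall>x y y'. (x,y)\<in>\<Union>C \<longrightarrow> (x,y')\<in>\<Union>C \<longrightarrow> y = y'"
      proof (intro allI impI)
        fix x y y' assume "(x,y)\<in>\<Union>C" "(x,y')\<in>\<Union>C"
        then obtain X Y where XY: "X \<in> C" "Y \<in> C" "(x,y) \<in> X" "(x,y') \<in> Y" by blast
        then have "X \<in> A" "Y \<in> A" using CA by auto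
        then show "y = y'" using ch[OF XY(1,2)] XY unfolding A_def by blast
      qed
      moreover have "\<forall>x y. (x,y)\<in>\<Union>C \<longrightarrow> y \<le> p x" using CA unfolding A_def by blast
      moreover have "(w, p w) \<in> \<Union>C" using CA False unfolding A_def by blast
      ultimately have "\<Union>C \<in> A" unfolding A_def by blast
      then show ?thesis by blast
    qed
  qed
  then obtain M where MA: "M \<in> A" and Mmax: "\<And>X. X \<in> A \<Longrightarrow> M \<subseteq> X \<Longrightarrow> X = M" by blast
  have Msub: "subspace M" and Mfun: "\<And>x y y'. (x,y)\<in>M \<Longrightarrow> (x,y')\<in>M \<Longrightarrow> y = y'"
    and Mp: "\<And>x y. (x,y)\<in>M \<Longrightarrow> y \<le> p x" and Mw: "(w, p w) \<in> M"
    using MA unfolding A_def by blast+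
  have Msc: "(a *\<^sub>R x, a * y) \<in> M" if "(x,y) \<in> M" for a x y
    using subspace_scale[OF Msub that, of a] by simp
  have Madd: "(x + x', y + y') \<in> M" if "(x,y) \<in> M" "(x',y') \<in> M" for x y x' y'
    using subspace_add[OF Msub that] by simp
  have Mdiff: "(x - x', y - y') \<in> M" if "(x,y) \<in> M" "(x',y') \<in> M" for x y x' y'
    using subspace_diff[OF Msub that] by simp
  have M0: "(0, 0) \<in> M" using subspace_0[OF Msub] by (simp add: zero_prod_def)
  have total: "\<exists>y. (z, y) \<in> M" for z
  proof (rule ccontr)
    assume nz: "\<not> (\<exists>y. (z, y) \<in> M)"
    define L where "L = {y - p (x - z) | x y. (x,y) \<in> M}"
    define c where "c = Sup L"
    have key: "y - p (x - z) \<le> p (x' + z) - y'" if "(x,y) \<in> M" "(x',y') \<in> M" for x y x' y'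
    proof -
      have "y + y' \<le> p (x + x')" using Mp[OF Madd[OF that]] .
      also have "x + x' = (x - z) + (x' + z)" by simp
      finally show ?thesis using sub[of "x - z" "x' + z"] by linarith
    qed
    have Lne: "L \<noteq> {}" using M0 L_def by blast
    have Lbdd: "bdd_above L" unfolding bdd_above_def L_def using key M0 by blast
    have c1: "y - p (x - z) \<le> c" if "(x,y) \<in> M" for x y
      unfolding c_def by (rule cSup_upper[OF _ Lbdd]) (use that L_def in blast)
    have c2: "c \<le> p (x + z) - y" if "(x,y) \<in> M" for x y
      unfolding c_def by (rule cSup_least[OF Lne]) (use that L_def key in blast)
    define M' where "M' = {(x + t *\<^sub>R z, y + t * c) | x y t. (x,y) \<in> M}"
    have inM': "(x + t *\<^sub>R z, y + t * c) \<in> M'" if "(x,y) \<in> M" for x y t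
      unfolding M'_def using that by blast
    have "M' \<in> A"
    proof -
      have "subspace M'" unfolding subspace_def
      proof (intro conjI ballI allI)
        show "0 \<in> M'" unfolding M'_def using M0 by (force simp: zero_prod_def)
      next
        fix u v assume "u \<in> M'" "v \<in> M'"
        then obtain x y t x' y' t' where "u = (x + t *\<^sub>R z, y + t * c)" "v = (x' + t' *\<^sub>R z, y' + t' * c)"
          "(x,y) \<in> M" "(x',y') \<in> M" unfolding M'_def by blast
        then have "u + v = ((x+x') + (t+t') *\<^sub>R z, (y+y') + (t+t')*c)" "(x+x', y+y') \<in> M"
          by (auto simp: algebra_simps scaleR_add_left intro: Madd)
        then show "u + v \<in> M'" unfolding M'_def by blast
      next
        fix a u assume "u \<in> M'"
        then obtain x y t where "u = (x + t *\<^sub>R z, y + t * c)" "(x,y) \<in> M" unfolding M'_def by blast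
        then have "a *\<^sub>R u = (a *\<^sub>R x + (a*t) *\<^sub>R z, (a*y) + (a*t)*c)" "(a *\<^sub>R x, a*y) \<in> M"
          by (auto simp: algebra_simps intro: Msc)
        then show "a *\<^sub>R u \<in> M'" unfolding M'_def by blast
      qed
      moreover have "\<forall>x y y'. (x,y)\<in>M' \<longrightarrow> (x,y')\<in>M' \<longrightarrow> y = y'"
      proof (intro allI impI)
        fix u y y' assume "(u,y) \<in> M'" "(u,y') \<in> M'"
        then obtain x1 y1 t1 x2 y2 t2 where e: "u = x1 + t1 *\<^sub>R z" "y = y1 + t1 * c"
          "u = x2 + t2 *\<^sub>R z" "y' = y2 + t2 * c" and m: "(x1,y1) \<in> M" "(x2,y2) \<in> M"
          unfolding M'_def by blast
        have "t1 = t2"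
        proof (rule ccontr)
          assume ne: "t1 \<noteq> t2"
          have "(t1 - t2) *\<^sub>R z = x2 - x1" using e by (simp add: algebra_simps)
          then have "(1/(t1 - t2)) *\<^sub>R ((t1 - t2) *\<^sub>R z) = (1/(t1 - t2)) *\<^sub>R (x2 - x1)" by simp
          then have "z = (1/(t1 - t2)) *\<^sub>R (x2 - x1)" using ne by simp
          then have "(z, (1/(t1-t2)) * (y2 - y1)) \<in> M" using Msc[OF Mdiff[OF m(2,1)], of "1/(t1-t2)"] by simp
          then show False using nz by blast
        qed
        then have "x1 = x2" using e by simp
        then have "y1 = y2" using Mfun m by blast
        then show "y = y'" using e \<open>t1 = t2\<close> by simp
      qed
      moreover have "\<forall>u v. (u,v)\<in>M' \<longrightarrow> v \<le> p u"
      proof (intro allI impI)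
        fix u v assume "(u,v) \<in> M'"
        then obtain x y t where e: "u = x + t *\<^sub>R z" "v = y + t * c" and m: "(x,y) \<in> M"
          unfolding M'_def by blast
        consider "t = 0" | "t > 0" | "t < 0" by linarith
        then show "v \<le> p u"
        proof cases
          case 1 then show ?thesis using e Mp[OF m] by simp
        next
          case 2
          have "c \<le> p ((1/t) *\<^sub>R x + z) - (1/t) * y" using c2[OF Msc[OF m, of "1/t"]] .
          then have "t * c \<le> t * p ((1/t) *\<^sub>R x + z) - y" using 2
            by (simp add: field_simps)
          also have "t * p ((1/t) *\<^sub>R x + z) = p (t *\<^sub>R ((1/t) *\<^sub>R x + z))" using hom[OF 2] by simp
          also have "t *\<^sub>R ((1/t) *\<^sub>R x + z) = u" using e 2 by (simp add: scaleR_add_right)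
          finally show ?thesis using e by simp
        next
          case 3
          define s where "s = - t"
          have s: "s > 0" using 3 s_def by simp
          have "(1/s) * y - p ((1/s) *\<^sub>R x - z) \<le> c" using c1[OF Msc[OF m, of "1/s"]] .
          then have "y - s * c \<le> s * p ((1/s) *\<^sub>R x - z)" using s
            by (simp add: field_simps)
          also have "s * p ((1/s) *\<^sub>R x - z) = p (s *\<^sub>R ((1/s) *\<^sub>R x - z))" using hom[OF s] by simp
          also have "s *\<^sub>R ((1/s) *\<^sub>R x - z) = u" using e s s_def by (simp add: scaleR_diff_right)
          finally show ?thesis using e s_def by simp
        qed
      qed
      moreover have "(w, p w) \<in> M'" using inM'[OF Mw, of 0] by simp
      ultimately show ?thesis unfolding A_def by blast
    qed
    moreover have "M \<subseteq> M'" using inM'[of _ _ 0] by auto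
    moreover have "(z, c) \<in> M'" using inM'[OF M0, of 1] by simp
    ultimately show False using Mmax nz by blast
  qed
  define g where "g x = (THE y. (x,y) \<in> M)" for x
  have gM: "(x, g x) \<in> M" for x
    unfolding g_def using total[of x] Mfun by (metis theI)
  have geq: "g x = y" if "(x,y) \<in> M" for x y using Mfun[OF gM that] .
  have "linear g"
  proof (rule linearI)
    fix x y show "g (x + y) = g x + g y" using geq[OF Madd[OF gM gM]] .
  next
    fix a x show "g (a *\<^sub>R x) = a *\<^sub>R g x" using geq[OF Msc[OF gM]] by simp
  qed
  moreover have "\<forall>x. g x \<le> p x" using gM Mp by blast
  moreover have "g w = p w" using geq[OF Mw] .
  ultimately show ?thesis by blast
qed

lemma closure_subspace:
  fixes S :: "'a::real_normed_vector set"
  assumes "subspace S" shows "subspace (closure S)"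
  unfolding subspace_def
proof (intro conjI ballI allI)
  show "0 \<in> closure S" using assms closure_subset subspace_0 by blast
next
  fix x y assume "x \<in> closure S" "y \<in> closure S"
  then obtain f g where f: "\<forall>n. f n \<in> S" "f \<longlonglongrightarrow> x" and g: "\<forall>n. g n \<in> S" "g \<longlonglongrightarrow> y"
    by (auto simp: closure_sequential)
  have "\<forall>n. f n + g n \<in> S" using f g assms subspace_add by blast
  moreover have "(\<lambda>n. f n + g n) \<longlonglongrightarrow> x + y" using f g tendsto_add by blast
  ultimately show "x + y \<in> closure S" by (auto simp: closure_sequential)
next
  fix c and x assume "x \<in> closure S"
  then obtain f where f: "\<forall>n. f n \<in> S" "f \<longlonglongrightarrow> x" by (auto simp: closure_sequential)
  have "\<forall>n. c *\<^sub>R f n \<in> S" using f assms subspace_scale by blast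
  moreover have "(\<lambda>n. c *\<^sub>R f n) \<longlonglongrightarrow> c *\<^sub>R x" using f tendsto_scaleR tendsto_const by blast
  ultimately show "c *\<^sub>R x \<in> closure S" by (auto simp: closure_sequential)
qed

lemma hb_closed:
  fixes C :: "'a::real_normed_vector set"
  assumes cl: "closed C" and sC: "subspace C" and wC: "w \<notin> C"
  shows "\<exists>g::'a \<Rightarrow> real. bounded_linear g \<and> (\<forall>c\<in>C. g c = 0) \<and> g w = 1"
proof -
  define p where "p x = infdist x C" for x
  have C0: "0 \<in> C" using sC subspace_0 by blast
  then have Cne: "C \<noteq> {}" by blast
  have sub: "p (x+y) \<le> p x + p y" for x y
  proof -
    have "p (x+y) - p y \<le> dist x a" if a: "a \<in> C" for a
    proof -
      have "p (x+y) - dist x a \<le> dist y b" if b: "b \<in> C" for b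
      proof -
        have "p (x+y) \<le> dist (x+y) (a+b)" unfolding p_def
          by (rule infdist_le) (use a b sC subspace_add in blast)
        also have "\<dots> \<le> dist x a + dist y b"
          by (rule dist_triangle_add)
        finally show ?thesis by simp
      qed
      then have "p (x+y) - dist x a \<le> p y" unfolding p_def[of y] infdist_notempty[OF Cne]
        by (intro cINF_greatest[OF Cne]) (simp add: p_def)
      then show ?thesis by simp
    qed
    then have "p (x+y) - p y \<le> p x" unfolding p_def[of x] infdist_notempty[OF Cne]
      by (intro cINF_greatest[OF Cne]) (simp add: p_def)
    then show ?thesis by simp
  qed
  have homle: "p (a *\<^sub>R x) \<le> a * p x" if a: "a > 0" for a x
  proof -
    have "p (a *\<^sub>R x) / a \<le> dist x b" if b: "b \<in> C" for b
    proof -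
      have "p (a *\<^sub>R x) \<le> dist (a *\<^sub>R x) (a *\<^sub>R b)" unfolding p_def
        by (rule infdist_le) (use b sC subspace_scale in blast)
      also have "\<dots> = a * dist x b" using a
        by (simp add: dist_norm flip: scaleR_diff_right)
      finally show ?thesis using a by (simp add: field_simps)
    qed
    then have "p (a *\<^sub>R x) / a \<le> p x" unfolding p_def[of x] infdist_notempty[OF Cne]
      by (intro cINF_greatest[OF Cne]) (simp add: p_def)
    then show ?thesis using a by (simp add: field_simps)
  qed
  have hom: "p (a *\<^sub>R x) = a * p x" if a: "a > 0" for a x
  proof -
    have "p x = p ((1/a) *\<^sub>R (a *\<^sub>R x))" using a by simp
    also have "\<dots> \<le> (1/a) * p (a *\<^sub>R x)" using homle[of "1/a" "a *\<^sub>R x"] a by simp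
    finally have "a * p x \<le> p (a *\<^sub>R x)" using a by (simp add: field_simps)
    then show ?thesis using homle[OF a, of x] by simp
  qed
  have nn: "p x \<ge> 0" for x unfolding p_def by (rule infdist_nonneg)
  have w0: "w \<noteq> 0" using wC C0 by blast
  obtain g where g: "linear g" "\<forall>x. g x \<le> p x" "g w = p w"
    using hb_ext[of p w, OF sub hom nn w0] by blast
  have d: "p w > 0" unfolding p_def by (rule infdist_pos_not_in_closed[OF cl Cne wC])
  have pn: "p x \<le> norm x" for x
    unfolding p_def using infdist_le[OF C0, of x] by simp
  define g' where "g' x = g x / p w" for x
  have "bounded_linear g'"
  proof -
    have "linear g'" unfolding g'_def using g(1)
      by (intro linearI) (simp_all add: linear_add linear_scale add_divide_distrib)
    moreover have "norm (g' x) \<le> norm x * (1 / p w)" for x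
    proof -
      have "g x \<le> norm x" using g(2) pn order_trans by blast
      moreover have "- g x \<le> norm x" using g(2)[rule_format, of "-x"] pn[of "-x"] linear_neg[OF g(1)] by simp
      ultimately have "\<bar>g x\<bar> \<le> norm x" by simp
      moreover have "norm (g' x) = \<bar>g x\<bar> / p w" using d by (simp add: g'_def)
      ultimately have "norm (g' x) \<le> norm x / p w" using d by (simp add: divide_right_mono)
      then show ?thesis by simp
    qed
    ultimately show ?thesis
      by (intro bounded_linear_intro[of g' "1 / p w"]) (auto simp: linear_add linear_scale)
  qed
  moreover have "\<forall>c\<in>C. g' c = 0"
  proof
    fix c assume c: "c \<in> C"
    have "g c \<le> p c" using g(2) by blast
    moreover have "p c = 0" unfolding p_def using c by simp
    ultimately have "g c \<le> 0" by simp
    moreover have "- c \<in> C" using c sC subspace_neg by blast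
    then have "p (-c) = 0" unfolding p_def by simp
    then have "g (-c) \<le> 0" using g(2) by (metis)
    ultimately show "g' c = 0" unfolding g'_def using linear_neg[OF g(1)] by simp
  qed
  moreover have "g' w = 1" unfolding g'_def using g(3) d by simp
  ultimately show ?thesis by (intro exI[of _ g']) simp
qed

lemma cs_facts:
  assumes "complex_structure J"
  shows "linear J" "\<And>x. J (J x) = - x" "\<And>x. norm (J x) = norm x" "bounded_linear J"
proof -
  show lJ: "linear J" and "\<And>x. J (J x) = - x" using assms by (auto simp: complex_structure_def)
  show nJ: "\<And>x. norm (J x) = norm x"
  proof -
    fix x
    have "norm (cscale J \<i> x) = cmod \<i> * norm x" using assms by (simp add: complex_structure_def)
    then show "norm (J x) = norm x" by (simp add: cscale_def)
  qed
  show "bounded_linear J"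
    using lJ nJ by (auto simp: bounded_linear_def bounded_linear_axioms_def intro!: exI[of _ 1])
qed

definition gen :: "('a \<Rightarrow> 'a) set \<Rightarrow> 'a set \<Rightarrow> 'a set" where
  "gen A E = {T x | T x. T \<in> A \<and> x \<in> E}"

lemma Phi_gen: "Phi J A E = closure (span (gen A E \<union> J ` gen A E))"
  unfolding Phi_def closed_cspan_def cspan_def gen_def by simp

lemma Phi_props:
  assumes cs: "complex_structure J"
  shows "closed (Phi J A E)" "subspace (Phi J A E)" "\<And>x. x \<in> Phi J A E \<Longrightarrow> J x \<in> Phi J A E"
    "gen A E \<subseteq> Phi J A E"
proof -
  note J = cs_facts[OF cs]
  define G where "G = gen A E"
  define Y where "Y = span (G \<union> J ` G)"
  have P: "Phi J A E = closure Y" unfolding Phi_gen Y_def G_def ..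
  show "closed (Phi J A E)" unfolding P by simp
  show "subspace (Phi J A E)" unfolding P Y_def by (intro closure_subspace subspace_span)
  have JY: "J ` Y \<subseteq> Y"
  proof -
    have "J ` (G \<union> J ` G) \<subseteq> Y"
    proof
      fix y assume "y \<in> J ` (G \<union> J ` G)"
      then obtain z where z: "z \<in> G" "y = J z \<or> y = J (J z)" by blast
      have zs: "z \<in> Y" "J z \<in> Y" unfolding Y_def using z(1) by (auto intro: span_base)
      show "y \<in> Y" using z(2)
      proof
        assume "y = J z" then show ?thesis using zs by simp
      next
        assume "y = J (J z)" then have "y = - z" by (simp add: J(2))
        then show ?thesis using zs(1) unfolding Y_def by (simp add: span_neg)
      qed
    qed
    then have "span (J ` (G \<union> J ` G)) \<subseteq> Y" unfolding Y_def by (intro span_minimal) auto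
    then show ?thesis unfolding Y_def linear_span_image[OF J(1)] .
  qed
  have "J ` closure Y \<subseteq> closure (J ` Y)" by (rule closure_bounded_linear_image_subset[OF J(4)])
  also have "\<dots> \<subseteq> closure Y" using JY closure_mono by blast
  finally show "\<And>x. x \<in> Phi J A E \<Longrightarrow> J x \<in> Phi J A E" unfolding P by blast
  have "G \<subseteq> Y" unfolding Y_def by (meson Un_subset_iff span_superset)
  also have "Y \<subseteq> closure Y" by (rule closure_subset)
  finally show "gen A E \<subseteq> Phi J A E" unfolding P G_def .
qed

lemma Phi_mono: "A \<subseteq> B \<Longrightarrow> Phi J A E \<subseteq> Phi J B E"
proof -
  assume "A \<subseteq> B"
  then have "gen A E \<subseteq> gen B E" unfolding gen_def by blast
  then show ?thesis unfolding Phi_gen by (intro closure_mono span_mono Un_mono image_mono)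
qed

lemma Phi_least:
  assumes cs: "complex_structure J" and "gen B E \<subseteq> Phi J A E"
  shows "Phi J B E \<subseteq> Phi J A E"
proof -
  note P = Phi_props[OF cs, where A=A and E=E]
  have "gen B E \<union> J ` gen B E \<subseteq> Phi J A E" using assms(2) P(3) by blast
  then have "span (gen B E \<union> J ` gen B E) \<subseteq> Phi J A E" using P(2) by (rule span_minimal)
  then show ?thesis unfolding Phi_gen[of J B] using P(1) by (rule closure_minimal)
qed


lemma keyK:
  fixes J :: "'a::real_normed_vector \<Rightarrow> 'a"
  assumes cs: "complex_structure J" and nst: "nest J \<E>" and bim: "bimodule J \<E> \<J>"
    and T: "T \<in> \<J>" and cl: "closed C" and sC: "subspace C" and wE: "w \<in> E" and wC: "w \<notin> C"
    and hyp: "\<And>G. G \<in> \<E> \<Longrightarrow> G \<subseteq> C \<or> u \<in> G"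
  shows "T u \<in> gen (finite_rank_part \<J>) E"
proof -
  note J = cs_facts[OF cs]
  obtain g :: "'a \<Rightarrow> real" where g: "bounded_linear g" "\<And>c. c \<in> C \<Longrightarrow> g c = 0" "g w = 1"
    using hb_closed[OF cl sC wC] by blast
  have lg: "linear g" using g(1) bounded_linear.linear by blast
  define b where "b = g (J w)"
  define u' where "u' = (1 / (1 + b\<^sup>2)) *\<^sub>R (u + b *\<^sub>R J u)"
  define R where "R z = g z *\<^sub>R u' - g (J z) *\<^sub>R J u'" for z
  have b0: "1 + b\<^sup>2 > 0" by (simp add: add_pos_nonneg)
  have Ju': "J u' = (1 / (1 + b\<^sup>2)) *\<^sub>R (J u - b *\<^sub>R u)"
    unfolding u'_def by (simp add: linear_add[OF J(1)] linear_scale[OF J(1)] J(2))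
  have Rw: "R w = u"
  proof -
    have "R w = u' - b *\<^sub>R J u'" unfolding R_def b_def using g(3) by simp
    also have "\<dots> = (1 / (1 + b\<^sup>2)) *\<^sub>R ((u + b *\<^sub>R J u) - b *\<^sub>R (J u - b *\<^sub>R u))"
      by (simp only: Ju') (simp add: u'_def algebra_simps)
    also have "(u + b *\<^sub>R J u) - b *\<^sub>R (J u - b *\<^sub>R u) = (1 + b\<^sup>2) *\<^sub>R u"
      by (simp add: algebra_simps power2_eq_square)
    finally show ?thesis using b0 by simp
  qed
  have blR: "bounded_linear R"
  proof -
    have "bounded_linear (\<lambda>z. g z *\<^sub>R u')"
      using bounded_linear_compose[OF bounded_linear_scaleR_left g(1)] .
    moreover have "bounded_linear (\<lambda>z. g (J z) *\<^sub>R J u')"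
      using bounded_linear_compose[OF bounded_linear_scaleR_left bounded_linear_compose[OF g(1) J(4)]] .
    ultimately show ?thesis unfolding R_def[abs_def] by (rule bounded_linear_sub)
  qed
  have RJ: "R (J z) = J (R z)" for z
    unfolding R_def by (simp add: J(2) linear_neg[OF lg] linear_diff[OF J(1)] linear_scale[OF J(1)])
  have Rnest: "R \<in> nest_alg J \<E>"
    unfolding nest_alg_def bops_def
  proof (intro CollectI conjI ballI allI blR)
    fix z show "R (J z) = J (R z)" by (rule RJ)
  next
    fix G assume G: "G \<in> \<E>"
    have cG: "closed G" "subspace G" "\<And>x. x \<in> G \<Longrightarrow> J x \<in> G"
      using nst G by (auto simp: nest_def csubspace_def)
    show "R ` G \<subseteq> G"
    proof
      fix y assume "y \<in> R ` G"
      then obtain z where z: "z \<in> G" "y = R z" by blast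
      from hyp[OF G] show "y \<in> G"
      proof
        assume "G \<subseteq> C"
        then have "g z = 0" "g (J z) = 0" using z cG g(2) by auto
        then have "y = 0" using z unfolding R_def by simp
        then show ?thesis using cG(2) subspace_0 by blast
      next
        assume uG: "u \<in> G"
        have "u' \<in> G" unfolding u'_def using uG cG
          by (intro subspace_scale subspace_add) auto
        then have "J u' \<in> G" using cG by blast
        then have "g z *\<^sub>R u' - g (J z) *\<^sub>R J u' \<in> G" using \<open>u' \<in> G\<close> cG(2)
          by (intro subspace_diff subspace_scale) auto
        then show ?thesis using z(2) unfolding R_def by simp
      qed
    qed
  qed
  have Jsub: "\<J> \<subseteq> bops J" and mod: "\<And>A S. A \<in> nest_alg J \<E> \<Longrightarrow> S \<in> \<J> \<Longrightarrow> A \<circ> S \<in> \<J> \<and> S \<circ> A \<in> \<J>"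
    using bim by (auto simp: bimodule_def op_csubspace_def)
  have TR: "T \<circ> R \<in> \<J>" using mod[OF Rnest T] by blast
  have lT: "linear T" using Jsub T by (auto simp: bops_def bounded_linear.linear)
  have "finite_rank (T \<circ> R)"
    unfolding finite_rank_def
  proof (intro exI conjI)
    show "finite {T u', T (J u')}" by simp
    show "range (T \<circ> R) \<subseteq> span {T u', T (J u')}"
    proof
      fix y assume "y \<in> range (T \<circ> R)"
      then obtain z where "y = T (R z)" by auto
      then have "y = g z *\<^sub>R T u' - g (J z) *\<^sub>R T (J u')"
        unfolding R_def by (simp add: linear_diff[OF lT] linear_scale[OF lT])
      moreover have "g z *\<^sub>R T u' - g (J z) *\<^sub>R T (J u') \<in> span {T u', T (J u')}"
        by (intro span_diff span_scale span_base) auto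
      ultimately show "y \<in> span {T u', T (J u')}" by simp
    qed
  qed
  then have "T \<circ> R \<in> finite_rank_part \<J>" using TR by (simp add: finite_rank_part_def)
  moreover have "T u = (T \<circ> R) w" using Rw by simp
  ultimately show ?thesis unfolding gen_def using wE by blast
qed

theorem mainTheorem8:
  fixes J :: "'a::banach \<Rightarrow> 'a" and \<E> :: "'a set set" and \<J> :: "('a \<Rightarrow> 'a) set"
  assumes "complex_structure J"
    and "nest J \<E>"
    and "bimodule J \<E> \<J>"
  shows "\<forall>E\<in>\<E>. Phi J (finite_rank_part \<J>) E = Phi J (op_closure J (finite_rank_part \<J>)) E
               \<and> Phi J (op_closure J (finite_rank_part \<J>)) E = Phi J \<J> E"
proof
  fix E assume E: "E \<in> \<E>"
  note cs = assms(1) and nst = assms(2) and bim = assms(3)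
  define J0 where "J0 = finite_rank_part \<J>"
  define J0b where "J0b = op_closure J J0"
  define P where "P = Phi J J0 E"
  note PP = Phi_props[OF cs, where A=J0 and E=E, folded P_def]
  have Jsub: "\<J> \<subseteq> bops J" using bim by (auto simp: bimodule_def op_csubspace_def)
  have s3: "J0 \<subseteq> \<J>" unfolding J0_def finite_rank_part_def by blast
  have s1: "J0 \<subseteq> J0b"
  proof
    fix T assume T: "T \<in> J0"
    then have "T \<in> bops J" using s3 Jsub by blast
    moreover have "onorm (\<lambda>x. T x - T x) = 0" by (simp add: onorm_zero)
    ultimately show "T \<in> J0b" unfolding J0b_def op_closure_def using T by force
  qed
  have s2: "gen J0b E \<subseteq> P"
  proof
    fix y assume "y \<in> gen J0b E"
    then obtain T x where Tx: "y = T x" "T \<in> J0b" "x \<in> E" unfolding gen_def by blast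
    have Tb: "T \<in> bops J" and app: "\<And>e. e > 0 \<Longrightarrow> \<exists>S\<in>J0. onorm (\<lambda>x. T x - S x) < e"
      using Tx(2) unfolding J0b_def op_closure_def by blast+
    have "T x \<in> closure (gen J0 E)"
      unfolding closure_approachable
    proof (intro allI impI)
      fix e :: real assume e: "e > 0"
      have e': "e / (norm x + 1) > 0" using e by (simp add: add_nonneg_pos)
      obtain S where S: "S \<in> J0" "onorm (\<lambda>x. T x - S x) < e / (norm x + 1)"
        using app[OF e'] by blast
      have Sb: "S \<in> bops J" using S(1) s3 Jsub by blast
      have bl: "bounded_linear (\<lambda>x. T x - S x)"
        using Tb Sb by (auto simp: bops_def intro: bounded_linear_sub)
      have "dist (S x) (T x) = norm (T x - S x)" by (simp add: dist_norm norm_minus_commute)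
      also have "\<dots> \<le> onorm (\<lambda>x. T x - S x) * norm x" using onorm[OF bl] .
      also have "\<dots> \<le> e / (norm x + 1) * norm x"
        using S(2) by (intro mult_right_mono) auto
      also have "\<dots> < e"
      proof -
        have eq: "e / (norm x + 1) * norm x = e * (norm x / (norm x + 1))" by simp
        have n1: "0 < norm x + 1" by (simp add: add_nonneg_pos)
        have "norm x / (norm x + 1) < 1" using n1 by (simp add: divide_less_eq)
        then have "e * (norm x / (norm x + 1)) < e * 1" using e by (intro mult_strict_left_mono) auto
        then show ?thesis using eq by linarith
      qed
      finally have "dist (S x) (T x) < e" .
      moreover have "S x \<in> gen J0 E" unfolding gen_def using S(1) Tx(3) by blast
      ultimately show "\<exists>y\<in>gen J0 E. dist y (T x) < e" by blast
    qed
    moreover have "closure (gen J0 E) \<subseteq> P" using PP(4) PP(1) by (rule closure_minimal)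
    ultimately show "y \<in> P" using Tx(1) by blast
  qed
  have s4: "gen \<J> E \<subseteq> P"
  proof
    fix y assume "y \<in> gen \<J> E"
    then obtain T x where Tx: "y = T x" "T \<in> \<J>" "x \<in> E" unfolding gen_def by blast
    have Tb: "bounded_linear T" using Tx(2) Jsub by (auto simp: bops_def)
    have nestE: "\<And>G. G \<in> \<E> \<Longrightarrow> closed G \<and> subspace G"
      and tot: "\<And>A B. A \<in> \<E> \<Longrightarrow> B \<in> \<E> \<Longrightarrow> A \<subseteq> B \<or> B \<subseteq> A"
      using nst by (auto simp: nest_def csubspace_def)
    define U where "U = \<Union>{K \<in> \<E>. K \<subset> E}"
    define D where "D = closure (span U)"
    show "y \<in> P"
    proof (cases "x \<in> D")
      case False
      have "T x \<in> gen J0 E" unfolding J0_def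
      proof (rule keyK[OF cs nst bim Tx(2), of D x E x])
        show "closed D" unfolding D_def by simp
        show "subspace D" unfolding D_def by (intro closure_subspace subspace_span)
        show "x \<in> E" by (rule Tx(3))
        show "x \<notin> D" by (rule False)
        fix G assume G: "G \<in> \<E>"
        show "G \<subseteq> D \<or> x \<in> G"
        proof (cases "E \<subseteq> G")
          case True then show ?thesis using Tx(3) by blast
        next
          case False
          then have "G \<subset> E" using tot[OF G E] by blast
          then have "G \<subseteq> U" unfolding U_def using G by blast
          also have "U \<subseteq> D" unfolding D_def using span_superset closure_subset by blast
          finally show ?thesis by blast
        qed
      qed
      then show ?thesis using Tx(1) PP(4) by blast
    next
      case True
      have TU: "T ` U \<subseteq> P"
      proof
        fix v assume "v \<in> T ` U"
        then obtain z K where zK: "v = T z" "z \<in> K" "K \<in> \<E>" "K \<subset> E" unfolding U_def by blast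
        then obtain w where w: "w \<in> E" "w \<notin> K" by blast
        have "T z \<in> gen J0 E" unfolding J0_def
        proof (rule keyK[OF cs nst bim Tx(2), of K w E z])
          show "closed K" "subspace K" using nestE[OF zK(3)] by auto
          show "w \<in> E" "w \<notin> K" using w by auto
          fix G assume G: "G \<in> \<E>"
          show "G \<subseteq> K \<or> z \<in> G" using tot[OF G zK(3)] zK(2) by blast
        qed
        then show "v \<in> P" using zK(1) PP(4) by blast
      qed
      have lT: "linear T" using Tb bounded_linear.linear by blast
      have "T ` span U \<subseteq> P"
        unfolding linear_span_image[OF lT, symmetric] using TU PP(2) by (rule span_minimal)
      then have "closure (T ` span U) \<subseteq> P" using PP(1) by (rule closure_minimal)
      moreover have "T ` D \<subseteq> closure (T ` span U)"
        unfolding D_def by (rule closure_bounded_linear_image_subset[OF Tb])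
      ultimately show ?thesis using True Tx(1) by blast
    qed
  qed
  have e1: "Phi J J0 E \<subseteq> Phi J J0b E" by (rule Phi_mono[OF s1])
  have e2: "Phi J J0b E \<subseteq> Phi J J0 E" using Phi_least[OF cs s2[unfolded P_def]] .
  have e3: "Phi J J0 E \<subseteq> Phi J \<J> E" by (rule Phi_mono[OF s3])
  have e4: "Phi J \<J> E \<subseteq> Phi J J0 E" using Phi_least[OF cs s4[unfolded P_def]] .
  show "Phi J (finite_rank_part \<J>) E = Phi J (op_closure J (finite_rank_part \<J>)) E
               \<and> Phi J (op_closure J (finite_rank_part \<J>)) E = Phi J \<J> E"
    using e1 e2 e3 e4 unfolding J0b_def J0_def by blast
qed

end
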